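(* Every finite graph $G$ is $(\lceil \mathrm{mad}(G)/2\rceil+1,\,1)$-choosable.
   Context: The maximum average degree of $G$ is $\mathrm{mad}(G)=\max\{2|E(H)|/|V(H)| : H \text{ a subgraph of } G\}$. A $(k,d)$-list assignment for $G$ assigns to each vertex $v$ a list $L(v)$ of at least $k$ colors such that $|L(x)\cap L(y)|\le d$ whenever $x$ and $y$ are adjacent. $G$ is $(k,d)$-choosable if for every $(k,d)$-list assignment $L$ there is a proper vertex coloring $\varphi$ of $G$ with $\varphi(v)\in L(v)$ for all $v$. *)

theory Defs
  imports Complex_Main
begin

definition graph :: "'a set \<Rightarrow> 'a set set \<Rightarrow> bool" where
  "graph V E \<longleftrightarrow> finite V \<and> (\<forall>e\<in>E. e \<subseteq> V \<and> card e = 2)"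

definition adjacent :: "'a set set \<Rightarrow> 'a \<Rightarrow> 'a \<Rightarrow> bool" where
  "adjacent E x y \<longleftrightarrow> {x, y} \<in> E"

definition mad :: "'a set \<Rightarrow> 'a set set \<Rightarrow> real" where
  "mad V E = (if V = {} then 0 else
     Max {2 * real (card F) / real (card W) | W F.
            W \<subseteq> V \<and> W \<noteq> {} \<and> F \<subseteq> E \<and> (\<forall>e\<in>F. e \<subseteq> W)})"

definition kd_list_assignment ::
    "'a set \<Rightarrow> 'a set set \<Rightarrow> nat \<Rightarrow> nat \<Rightarrow> ('a \<Rightarrow> 'c set) \<Rightarrow> bool" where
  "kd_list_assignment V E k d L \<longleftrightarrow>
     (\<forall>v\<in>V. finite (L v) \<and> card (L v) \<ge> k) \<and>
     (\<forall>x\<in>V. \<forall>y\<in>V. adjacent E x y \<longrightarrow> card (L x \<inter> L y) \<le> d)"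

definition kd_choosable :: "'a set \<Rightarrow> 'a set set \<Rightarrow> nat \<Rightarrow> nat \<Rightarrow> 'c itself \<Rightarrow> bool" where
  "kd_choosable V E k d (_ :: 'c itself) \<longleftrightarrow>
     (\<forall>L :: 'a \<Rightarrow> 'c set. kd_list_assignment V E k d L \<longrightarrow>
        (\<exists>\<phi>. (\<forall>v\<in>V. \<phi> v \<in> L v) \<and>
             (\<forall>x\<in>V. \<forall>y\<in>V. adjacent E x y \<longrightarrow> \<phi> x \<noteq> \<phi> y)))"

end

theory Submission
  imports Defs
begin

lemma two_elems: assumes "card (X::'a set) \<ge> 2" obtains x y where "x\<in>X" "y\<in>X" "x\<noteq>y"
proof -
  have "finite X" "X \<noteq> {}" using assms by (auto intro: ccontr)
  then obtain x where x: "x \<in> X" by blast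
  have "card (X - {x}) \<ge> 1" using assms x \<open>finite X\<close> by simp
  then obtain y where "y \<in> X - {x}" by (metis all_not_in_conv card.empty not_one_le_zero)
  then show ?thesis using that x by blast
qed
lemma hall_cap:
  fixes A :: "'i \<Rightarrow> 'a set" and t :: nat
  shows "finite I \<Longrightarrow> (\<forall>i\<in>I. finite (A i)) \<Longrightarrow> (\<forall>J\<subseteq>I. card J \<le> t * card (\<Union>(A`J)))
    \<Longrightarrow> \<exists>f. (\<forall>i\<in>I. f i \<in> A i) \<and> (\<forall>v. card {i\<in>I. f i = v} \<le> t)"
proof (induction "\<Sum>i\<in>I. card (A i)" arbitrary: A rule: less_induct)
  case less
  show ?case
  proof (cases "\<exists>i\<in>I. card (A i) \<ge> 2")
    case False
    have ne: "A i \<noteq> {}" if "i\<in>I" for i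
    proof
      assume "A i = {}"
      have "card {i} \<le> t * card (\<Union>(A`{i}))" using less.prems(3) that by blast
      then show False using \<open>A i = {}\<close> by simp
    qed
    have "\<exists>a. A i = {a}" if "i\<in>I" for i
    proof -
      have "card (A i) \<le> 1" using False that by force
      moreover have "card (A i) > 0" using ne[OF that] less.prems(2) that by auto
      ultimately have "card (A i) = 1" by linarith
      then show ?thesis by (meson card_1_singletonE)
    qed
    then obtain g where g: "\<forall>i\<in>I. A i = {g i}" by metis
    show ?thesis
    proof (intro exI conjI allI ballI)
      show "g i \<in> A i" if "i\<in>I" for i using g that by simp
      fix v
      let ?J = "{i\<in>I. g i = v}"
      have "\<Union>(A`?J) \<subseteq> {v}" using g by auto
      hence "card (\<Union>(A`?J)) \<le> 1" using card_mono[of "{v}"] by simp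
      moreover have "card ?J \<le> t * card (\<Union>(A`?J))" using less.prems(3) by auto
      ultimately show "card ?J \<le> t"

      proof -
        have "t * card (\<Union>(A`?J)) \<le> t * 1" by (rule mult_le_mono2) fact
        then show ?thesis using \<open>card ?J \<le> t * card (\<Union>(A`?J))\<close> by linarith
      qed
    qed
  next
    case True
    then obtain i0 where i0: "i0\<in>I" "card (A i0) \<ge> 2" by blast
    then obtain x y where xy: "x\<in>A i0" "y \<in> A i0" "x\<noteq>y"
      using two_elems by metis
    define A1 where "A1 = A(i0 := A i0 - {x})"
    define A2 where "A2 = A(i0 := A i0 - {y})"
    have key: "(\<forall>J\<subseteq>I. card J \<le> t * card (\<Union>(A1`J))) \<or> (\<forall>J\<subseteq>I. card J \<le> t * card (\<Union>(A2`J)))"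
    proof (rule ccontr)
      assume "\<not> ?thesis"
      then obtain J1 J2 where J1: "J1 \<subseteq> I" "card J1 > t * card (\<Union>(A1`J1))"
        and J2: "J2 \<subseteq> I" "card J2 > t * card (\<Union>(A2`J2))"
        by (auto simp: not_le)
      have "i0 \<in> J1"
      proof (rule ccontr)
        assume "i0 \<notin> J1"
        then have "A1`J1 = A`J1" by (auto simp: A1_def)
        then show False using J1 less.prems(3) by (metis not_le)
      qed
      have "i0 \<in> J2"
      proof (rule ccontr)
        assume "i0 \<notin> J2"
        then have "A2`J2 = A`J2" by (auto simp: A2_def)
        then show False using J2 less.prems(3) by (metis not_le)
      qed
      define U1 where "U1 = \<Union>(A1`J1)"
      define U2 where "U2 = \<Union>(A2`J2)"
      have fJ: "finite J1" "finite J2" using J1 J2 less.prems(1) finite_subset by auto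
      have fU: "finite U1" "finite U2" using fJ J1 J2 less.prems(2)
        by (auto simp: U1_def U2_def A1_def A2_def)
      have s1: "\<Union>(A`(J1\<union>J2)) \<subseteq> U1 \<union> U2"
      proof
        fix z assume "z \<in> \<Union>(A`(J1\<union>J2))"
        then obtain i where i: "i \<in> J1 \<union> J2" "z \<in> A i" by auto
        show "z \<in> U1 \<union> U2"
        proof (cases "i = i0")
          case True
          show ?thesis
          proof (cases "z = x")
            case True
            then have "z \<in> A2 i0" using xy i \<open>i = i0\<close> by (auto simp: A2_def)
            then show ?thesis using \<open>i0 \<in> J2\<close> unfolding U2_def by blast
          next
            case False
            then have "z \<in> A1 i0" using xy i \<open>i = i0\<close> by (auto simp: A1_def)
            then show ?thesis using \<open>i0 \<in> J1\<close> unfolding U1_def by blast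
          qed
        next
          case False
          then show ?thesis using i unfolding U1_def U2_def A1_def A2_def by auto
        qed
      qed
      have s2: "\<Union>(A`(J1\<inter>J2 - {i0})) \<subseteq> U1 \<inter> U2"
        unfolding U1_def U2_def A1_def A2_def by auto
      have h1: "card (J1\<union>J2) \<le> t * card (U1 \<union> U2)"
      proof -
        have "J1\<union>J2 \<subseteq> I" using J1 J2 by auto
        then have "card (J1\<union>J2) \<le> t * card (\<Union>(A`(J1\<union>J2)))" by (rule less.prems(3)[rule_format])
        also have "\<dots> \<le> t * card (U1 \<union> U2)" using s1 fU by (intro mult_le_mono2 card_mono) auto
        finally show ?thesis .
      qed
      have h2: "card (J1\<inter>J2 - {i0}) \<le> t * card (U1 \<inter> U2)"
      proof -
        have "J1\<inter>J2 - {i0} \<subseteq> I" using J1 J2 by auto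
        then have "card (J1\<inter>J2 - {i0}) \<le> t * card (\<Union>(A`(J1\<inter>J2 - {i0})))" by (rule less.prems(3)[rule_format])
        also have "\<dots> \<le> t * card (U1 \<inter> U2)" using s2 fU by (intro mult_le_mono2 card_mono) auto
        finally show ?thesis .
      qed
      have e1: "card (U1\<union>U2) + card (U1\<inter>U2) = card U1 + card U2" using card_Un_Int[OF fU(1) fU(2)] by linarith
      have e2: "card (J1\<union>J2) + card (J1\<inter>J2) = card J1 + card J2" using card_Un_Int[OF fJ(1) fJ(2)] by linarith
      have e3: "card (J1\<inter>J2 - {i0}) = card (J1\<inter>J2) - 1" using \<open>i0 \<in> J1\<close> \<open>i0 \<in> J2\<close> by simp
      have e4: "card (J1\<inter>J2) \<ge> 1" using \<open>i0 \<in> J1\<close> \<open>i0 \<in> J2\<close> fJ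
        by (metis IntI One_nat_def Suc_leI card_gt_0_iff empty_iff finite_Int)
      have e5: "t * card (U1\<union>U2) + t * card (U1\<inter>U2) = t * card U1 + t * card U2"
        using e1 by (metis add_mult_distrib2)
      show False using h1 h2 e2 e3 e4 e5 J1(2) J2(2) unfolding U1_def U2_def by linarith
    qed
    then obtain B where B: "B = A1 \<or> B = A2" and hallB: "\<forall>J\<subseteq>I. card J \<le> t * card (\<Union>(B`J))"
      by blast
    have sub: "\<forall>i. B i \<subseteq> A i" using B by (auto simp: A1_def A2_def split: if_splits)
    have finB: "\<forall>i\<in>I. finite (B i)" using sub less.prems(2) finite_subset by blast
    have "(\<Sum>i\<in>I. card (B i)) < (\<Sum>i\<in>I. card (A i))"
    proof (rule sum_strict_mono_ex1)
      show "finite I" by fact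
      show "\<forall>i\<in>I. card (B i) \<le> card (A i)" using sub less.prems(2) by (simp add: card_mono)
      show "\<exists>i\<in>I. card (B i) < card (A i)"
        using B i0 xy less.prems(2) by (auto simp: A1_def A2_def intro!: bexI[of _ i0])
    qed
    from less.hyps[OF this less.prems(1) finB hallB] obtain f where
      "\<forall>i\<in>I. f i \<in> B i" "\<forall>v. card {i\<in>I. f i = v} \<le> t" by blast
    then show ?thesis using sub by blast
  qed
qed


theorem lemma1:
  fixes V :: "'a set" and E :: "'a set set"
  assumes "graph V E"
  shows "kd_choosable V E (nat \<lceil>mad V E / 2\<rceil> + 1) 1 TYPE('c)"
proof -
  let ?t = "nat \<lceil>mad V E / 2\<rceil>"
  have finV: "finite V" and edges: "\<forall>e\<in>E. e \<subseteq> V \<and> card e = 2"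
    using assms by (auto simp: graph_def)
  have finE: "finite E"
  proof -
    have "E \<subseteq> Pow V" using edges by auto
    then show ?thesis using finV by (rule finite_subset[OF _ finite_Pow_iff[THEN iffD2]])
  qed
  define S where "S = {2 * real (card F) / real (card W) | W F.
            W \<subseteq> V \<and> W \<noteq> {} \<and> F \<subseteq> E \<and> (\<forall>e\<in>F. e \<subseteq> W)}"
  have finS: "finite S"
  proof -
    have "S \<subseteq> (\<lambda>(W,F). 2 * real (card F) / real (card W)) ` (Pow V \<times> Pow E)"
      unfolding S_def by auto
    then show ?thesis by (rule finite_subset) (use finV finE in auto)
  qed
  have dens: "\<forall>F\<subseteq>E. card F \<le> ?t * card (\<Union>((\<lambda>e. e)`F))"
  proof (intro allI impI)
    fix F assume F: "F \<subseteq> E"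
    show "card F \<le> ?t * card (\<Union>((\<lambda>e. e)`F))"
    proof (cases "F = {}")
      case True then show ?thesis by simp
    next
      case False
      define W where "W = \<Union>F"
      have WV: "W \<subseteq> V" using F edges unfolding W_def by blast
      have finW: "finite W" using WV finV by (rule finite_subset)
      obtain e where e: "e \<in> F" using False by blast
      have "card e = 2" using e F edges by auto
      then have "e \<noteq> {}" by auto
      then have Wne: "W \<noteq> {}" using e unfolding W_def by blast
      have cW: "real (card W) > 0" using finW Wne by (simp add: card_gt_0_iff)
      have "2 * real (card F) / real (card W) \<in> S"
        unfolding S_def using WV Wne F unfolding W_def by blast
      then have "2 * real (card F) / real (card W) \<le> mad V E"
        unfolding mad_def S_def[symmetric] using Wne WV finS by auto
      then have "real (card F) \<le> (mad V E / 2) * real (card W)"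
        using cW by (simp add: field_simps)
      also have "\<dots> \<le> real ?t * real (card W)"
        using cW by (intro mult_right_mono) (auto simp: real_nat_ceiling_ge)
      finally have "real (card F) \<le> real (?t * card W)" by (simp only: of_nat_mult)
      then have "card F \<le> ?t * card W" by (simp only: of_nat_le_iff)
      then show ?thesis unfolding W_def by simp
    qed
  qed
  obtain f where f1: "\<forall>e\<in>E. f e \<in> e" and f2: "\<forall>v. card {e\<in>E. f e = v} \<le> ?t"
  proof -
    have "\<forall>e\<in>E. finite e" using edges finV by (meson finite_subset)
    then show ?thesis using hall_cap[of E "\<lambda>e. e" ?t] finE dens that by blast
  qed
  show ?thesis
    unfolding kd_choosable_def
  proof (intro allI impI)
    fix L :: "'a \<Rightarrow> 'c set"
    assume L: "kd_list_assignment V E (?t + 1) 1 L"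
    have Lfin: "\<And>v. v \<in> V \<Longrightarrow> finite (L v)" and Lcard: "\<And>v. v \<in> V \<Longrightarrow> card (L v) \<ge> ?t + 1"
      and Lint: "\<And>x y. x \<in> V \<Longrightarrow> y \<in> V \<Longrightarrow> {x,y} \<in> E \<Longrightarrow> card (L x \<inter> L y) \<le> 1"
      using L by (auto simp: kd_list_assignment_def adjacent_def)
    define Out where "Out v = {e\<in>E. f e = v}" for v
    define B where "B v = (\<Union>e\<in>Out v. L v \<inter> \<Union>(L ` (e - {v})))" for v
    have other: "\<exists>u. u \<in> V \<and> u \<noteq> v \<and> e = {v,u}" if "e \<in> Out v" for e v
    proof -
      have eE: "e \<in> E" and ve: "v \<in> e" using that f1 by (auto simp: Out_def)
      have "card e = 2" using edges eE by blast
      then obtain a b where ab: "e = {a,b}" "a \<noteq> b" by (auto simp: card_2_iff)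
      have "e \<subseteq> V" using edges eE by auto
      then show ?thesis using ab ve by auto
    qed
    have cardB: "card (B v) \<le> ?t" if "v \<in> V" for v
    proof -
      have finO: "finite (Out v)" using finE by (simp add: Out_def)
      have each: "card (L v \<inter> \<Union>(L ` (e - {v}))) \<le> 1" if eO: "e \<in> Out v" for e
      proof -
        obtain u where u: "u \<in> V" "u \<noteq> v" "e = {v,u}" using other[OF eO] by blast
        have "e - {v} = {u}" using u by auto
        moreover have "{v,u} \<in> E" using eO u by (simp add: Out_def)
        ultimately show ?thesis using Lint[OF \<open>v \<in> V\<close> u(1)] by simp
      qed
      have "card (B v) \<le> (\<Sum>e\<in>Out v. card (L v \<inter> \<Union>(L ` (e - {v}))))"
        unfolding B_def using finO by (rule card_UN_le)
      also have "\<dots> \<le> (\<Sum>e\<in>Out v. 1)" using each by (intro sum_mono) auto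
      also have "\<dots> = card (Out v)" by simp
      also have "\<dots> \<le> ?t" using f2 by (simp add: Out_def)
      finally show ?thesis .
    qed
    have ex: "\<exists>c. c \<in> L v - B v" if "v \<in> V" for v
    proof (rule ccontr)
      assume "\<not> ?thesis"
      then have "L v \<subseteq> B v" by blast
      moreover have "B v \<subseteq> L v" unfolding B_def by blast
      ultimately have "L v = B v" by blast
      then show False using cardB[OF that] Lcard[OF that] by simp
    qed
    define \<phi> where "\<phi> v = (SOME c. c \<in> L v - B v)" for v
    have phi: "\<phi> v \<in> L v" "\<phi> v \<notin> B v" if "v \<in> V" for v
      using someI_ex[OF ex[OF that]] unfolding \<phi>_def by auto
    show "\<exists>\<phi>. (\<forall>v\<in>V. \<phi> v \<in> L v) \<and> (\<forall>x\<in>V. \<forall>y\<in>V. adjacent E x y \<longrightarrow> \<phi> x \<noteq> \<phi> y)"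
    proof (intro exI conjI ballI impI)
      show "\<phi> v \<in> L v" if "v \<in> V" for v using phi that by blast
      fix x y assume xy: "x \<in> V" "y \<in> V" "adjacent E x y"
      then have eE: "{x,y} \<in> E" by (simp add: adjacent_def)
      then have "card {x,y} = 2" using edges by blast
      then have "x \<noteq> y" by (cases "x = y") auto
      have "f {x,y} \<in> {x,y}" using f1 eE by blast
      then consider "f {x,y} = x" | "f {x,y} = y" by blast
      then show "\<phi> x \<noteq> \<phi> y"
      proof cases
        case 1
        then have "{x,y} \<in> Out x" using eE by (simp add: Out_def)
        moreover have "{x,y} - {x} = {y}" using \<open>x \<noteq> y\<close> by auto
        ultimately have "L x \<inter> L y \<subseteq> B x" unfolding B_def by (intro subsetI UN_I[of "{x,y}"]) auto
        then have "\<phi> x \<notin> L y" using phi(1)[OF xy(1)] phi(2)[OF xy(1)] by blast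
        then show ?thesis using phi(1)[OF xy(2)] by metis
      next
        case 2
        then have "{y,x} \<in> Out y" using eE by (simp add: Out_def insert_commute)
        moreover have "{y,x} - {y} = {x}" using \<open>x \<noteq> y\<close> by auto
        ultimately have "L y \<inter> L x \<subseteq> B y" unfolding B_def by (intro subsetI UN_I[of "{y,x}"]) auto
        then have "\<phi> y \<notin> L x" using phi(1)[OF xy(2)] phi(2)[OF xy(2)] by blast
        then show ?thesis using phi(1)[OF xy(1)] by metis
      qed
    qed
  qed
qed

end
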